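(* Let $G$ be a complete bipartite graph (with both parts nonempty). Then $c(G) = \min\{2, \delta(G)\}$, $c_{V,\mathrm{r}}(G) = \delta(G)$, and $c_V(G) = c_{E,\mathrm{r}}(G) = c_E(G) = \Delta(G)$.
   Context: $\delta(G)$ and $\Delta(G)$ denote minimum and maximum degree. In all games the players alternate turns, cops first; initially the cop player places all cops, then the robber player places the robber on a vertex (several pieces may share a position). In a turn each piece of the moving player may stay or make one move (no obligation to move). The robber always sits on vertices and moves to an adjacent vertex; $v_r$ denotes his current vertex. Classical version: cops on vertices moving to adjacent vertices; cops win if a cop is on $v_r$; $c(G)$ is the least number of cops that can force a win in finitely many turns. Vertex version: cops on vertices; cops win when every neighbor of $v_r$ is occupied by a cop; number $c_V(G)$. Edge version: cops sit on edges; a cop on edge $e$ may move to any edge sharing an endpoint with $e$; cops win when every edge incident to $v_r$ is occupied; number $c_E(G)$. Restrictive vertex version: as the vertex version, but after each robber turn (including his initial placement) no cop may be on $v_r$; in particular the robber may not move onto a cop-occupied vertex, and if a cop moves onto $v_r$ the robber must leave in his next turn; number $c_{V,\mathrm{r}}(G)$. Restrictive edge version: as the edge version, but the robber may not move along an edge currently occupied by a cop; number $c_{E,\mathrm{r}}(G)$. *)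

theory Defs
  imports Main
begin

text \<open>Graphs: a vertex set V with a symmetric irreflexive adjacency relation E.\<close>

definition neighbors :: "'a set \<Rightarrow> ('a \<Rightarrow> 'a \<Rightarrow> bool) \<Rightarrow> 'a \<Rightarrow> 'a set" where
  "neighbors V E v = {u \<in> V. E v u}"

definition min_degree :: "'a set \<Rightarrow> ('a \<Rightarrow> 'a \<Rightarrow> bool) \<Rightarrow> nat" where
  "min_degree V E = Min ((\<lambda>v. card (neighbors V E v)) ` V)"

definition max_degree :: "'a set \<Rightarrow> ('a \<Rightarrow> 'a \<Rightarrow> bool) \<Rightarrow> nat" where
  "max_degree V E = Max ((\<lambda>v. card (neighbors V E v)) ` V)"

definition graph_edges :: "'a set \<Rightarrow> ('a \<Rightarrow> 'a \<Rightarrow> bool) \<Rightarrow> 'a set set" where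
  "graph_edges V E = {{u, v} | u v. u \<in> V \<and> v \<in> V \<and> E u v}"

definition complete_bipartite ::
  "'a set \<Rightarrow> ('a \<Rightarrow> 'a \<Rightarrow> bool) \<Rightarrow> 'a set \<Rightarrow> 'a set \<Rightarrow> bool" where
  "complete_bipartite V E X Y \<longleftrightarrow> X \<noteq> {} \<and> Y \<noteq> {} \<and> X \<inter> Y = {} \<and> V = X \<union> Y \<and>
     (\<forall>u v. E u v \<longleftrightarrow> (u \<in> X \<and> v \<in> Y) \<or> (u \<in> Y \<and> v \<in> X))"

text \<open>Positions: list of cop positions (type 'c),
  robber vertex, and a flag telling whether the cops are to move.
  cm p q: a single cop may move from p to q (staying is always allowed);
  rm cs r r': robber at r may go to r' (staying must be included by rm if allowed);
  cap cs r: capture condition.  cwin is the set of positions from which the cops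
  can force a capture in finitely many turns (cops' attractor).\<close>

inductive cwin :: "('c \<Rightarrow> 'c \<Rightarrow> bool) \<Rightarrow> ('c list \<Rightarrow> 'a \<Rightarrow> 'a \<Rightarrow> bool) \<Rightarrow>
    ('c list \<Rightarrow> 'a \<Rightarrow> bool) \<Rightarrow> 'c list \<Rightarrow> 'a \<Rightarrow> bool \<Rightarrow> bool"
  for cm rm cap where
  captured: "cap cs r \<Longrightarrow> cwin cm rm cap cs r t"
| cop_turn: "list_all2 (\<lambda>p q. p = q \<or> cm p q) cs cs' \<Longrightarrow> cwin cm rm cap cs' r False
      \<Longrightarrow> cwin cm rm cap cs r True"
| robber_turn: "(\<And>r'. rm cs r r' \<Longrightarrow> cwin cm rm cap cs r' True) \<Longrightarrow> cwin cm rm cap cs r False"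

definition cops_win :: "'a set \<Rightarrow> 'c set \<Rightarrow> ('c \<Rightarrow> 'c \<Rightarrow> bool) \<Rightarrow>
    ('c list \<Rightarrow> 'a \<Rightarrow> 'a \<Rightarrow> bool) \<Rightarrow> ('c list \<Rightarrow> 'a \<Rightarrow> bool) \<Rightarrow>
    ('c list \<Rightarrow> 'a \<Rightarrow> bool) \<Rightarrow> nat \<Rightarrow> bool" where
  "cops_win V P cm rm cap ok k \<longleftrightarrow>
     (\<exists>cs. length cs = k \<and> set cs \<subseteq> P \<and>
        (\<forall>r \<in> V. ok cs r \<longrightarrow> cwin cm rm cap cs r True))"

definition edge_move :: "'a set \<Rightarrow> ('a \<Rightarrow> 'a \<Rightarrow> bool) \<Rightarrow> 'a set \<Rightarrow> 'a set \<Rightarrow> bool" where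
  "edge_move V E e e' \<longleftrightarrow> e' \<in> graph_edges V E \<and> e \<inter> e' \<noteq> {}"

definition cop_number :: "'a set \<Rightarrow> ('a \<Rightarrow> 'a \<Rightarrow> bool) \<Rightarrow> nat" where
  "cop_number V E = (LEAST k. cops_win V V (\<lambda>p q. q \<in> V \<and> E p q)
      (\<lambda>cs r r'. r' = r \<or> (r' \<in> V \<and> E r r'))
      (\<lambda>cs r. r \<in> set cs) (\<lambda>cs r. True) k)"

definition cop_number_V :: "'a set \<Rightarrow> ('a \<Rightarrow> 'a \<Rightarrow> bool) \<Rightarrow> nat" where
  "cop_number_V V E = (LEAST k. cops_win V V (\<lambda>p q. q \<in> V \<and> E p q)
      (\<lambda>cs r r'. r' = r \<or> (r' \<in> V \<and> E r r'))
      (\<lambda>cs r. neighbors V E r \<subseteq> set cs) (\<lambda>cs r. True) k)"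

definition cop_number_E :: "'a set \<Rightarrow> ('a \<Rightarrow> 'a \<Rightarrow> bool) \<Rightarrow> nat" where
  "cop_number_E V E = (LEAST k. cops_win V (graph_edges V E) (edge_move V E)
      (\<lambda>cs r r'. r' = r \<or> (r' \<in> V \<and> E r r'))
      (\<lambda>cs r. \<forall>u \<in> neighbors V E r. {r, u} \<in> set cs) (\<lambda>cs r. True) k)"

definition cop_number_Vr :: "'a set \<Rightarrow> ('a \<Rightarrow> 'a \<Rightarrow> bool) \<Rightarrow> nat" where
  "cop_number_Vr V E = (LEAST k. cops_win V V (\<lambda>p q. q \<in> V \<and> E p q)
      (\<lambda>cs r r'. (r' = r \<or> (r' \<in> V \<and> E r r')) \<and> r' \<notin> set cs)
      (\<lambda>cs r. neighbors V E r \<subseteq> set cs) (\<lambda>cs r. r \<notin> set cs) k)"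

definition cop_number_Er :: "'a set \<Rightarrow> ('a \<Rightarrow> 'a \<Rightarrow> bool) \<Rightarrow> nat" where
  "cop_number_Er V E = (LEAST k. cops_win V (graph_edges V E) (edge_move V E)
      (\<lambda>cs r r'. r' = r \<or> (r' \<in> V \<and> E r r' \<and> {r, r'} \<notin> set cs))
      (\<lambda>cs r. \<forall>u \<in> neighbors V E r. {r, u} \<in> set cs) (\<lambda>cs r. True) k)"

end

theory Submission
  imports Defs
begin

lemma escape:
  assumes "cwin cm rm cap cs r t" "Inv cs r t"
   and nocap: "\<And>cs r t. Inv cs r t \<Longrightarrow> \<not> cap cs r"
   and copm: "\<And>cs cs' r. Inv cs r True \<Longrightarrow> list_all2 (\<lambda>p q. p = q \<or> cm p q) cs cs' \<Longrightarrow> Inv cs' r False"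
   and robm: "\<And>cs r. Inv cs r False \<Longrightarrow> \<exists>r'. rm cs r r' \<and> Inv cs r' True"
  shows False
  using assms(1,2)
proof (induction rule: cwin.induct)
  case (captured cs r t) thus ?case using nocap by blast
next
  case (cop_turn cs cs' r) thus ?case using copm by blast
next
  case (robber_turn cs r) thus ?case using robm by blast
qed

lemma not_cops_win:
  assumes init: "\<And>cs. length cs = k \<Longrightarrow> set cs \<subseteq> P \<Longrightarrow> \<exists>r\<in>V. ok cs r \<and> Inv cs r True"
   and nocap: "\<And>cs r t. Inv cs r t \<Longrightarrow> \<not> cap cs r"
   and copm: "\<And>cs cs' r. Inv cs r True \<Longrightarrow> list_all2 (\<lambda>p q. p = q \<or> cm p q) cs cs' \<Longrightarrow> Inv cs' r False"
   and robm: "\<And>cs r. Inv cs r False \<Longrightarrow> \<exists>r'. rm cs r r' \<and> Inv cs r' True"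
  shows "\<not> cops_win V P cm rm cap ok k"
proof
  assume "cops_win V P cm rm cap ok k"
  then obtain cs where cs: "length cs = k" "set cs \<subseteq> P"
    "\<forall>r \<in> V. ok cs r \<longrightarrow> cwin cm rm cap cs r True" unfolding cops_win_def by blast
  from init[OF cs(1,2)] obtain r where "r \<in> V" "ok cs r" "Inv cs r True" by blast
  with cs(3) have "cwin cm rm cap cs r True" by blast
  from escape[OF this \<open>Inv cs r True\<close> nocap copm robm] show False .
qed

lemma least_eq:
  fixes n :: nat
  assumes "P n" "\<And>k. k < n \<Longrightarrow> \<not> P k"
  shows "(LEAST k. P k) = n"
proof (rule Least_equality)
  show "P n" by (rule assms(1))
  fix y assume "P y" thus "n \<le> y" using assms(2) not_le by blast
qed

lemma card_two_other:
  assumes "finite A" "card A \<ge> 2"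
  shows "\<exists>r\<in>A. r \<noteq> c"
proof (rule ccontr)
  assume "\<not> ?thesis"
  hence "A \<subseteq> {c}" by blast
  hence "card A \<le> card {c}" by (intro card_mono) auto
  hence "card A \<le> 1" by simp
  with assms show False by simp
qed

locale kb =
  fixes V :: "'a set" and E :: "'a \<Rightarrow> 'a \<Rightarrow> bool" and X Y :: "'a set"
  assumes fin: "finite V" and cb: "complete_bipartite V E X Y" and le: "card X \<le> card Y"
begin

lemma basics: "X \<noteq> {}" "Y \<noteq> {}" "X \<inter> Y = {}" "V = X \<union> Y"
  "\<And>u v. E u v \<longleftrightarrow> (u \<in> X \<and> v \<in> Y) \<or> (u \<in> Y \<and> v \<in> X)"
  using cb unfolding complete_bipartite_def by auto

lemma finX: "finite X" and finY: "finite Y" using fin basics(4) by auto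

lemma nbX: "x \<in> X \<Longrightarrow> neighbors V E x = Y"
  unfolding neighbors_def using basics by auto
lemma nbY: "y \<in> Y \<Longrightarrow> neighbors V E y = X"
  unfolding neighbors_def using basics by auto

lemma degs: "(\<lambda>v. card (neighbors V E v)) ` V = {card X, card Y}"
proof -
  obtain x y where "x \<in> X" "y \<in> Y" using basics by blast
  show ?thesis
  proof
    show "(\<lambda>v. card (neighbors V E v)) ` V \<subseteq> {card X, card Y}"
      using nbX nbY basics(4) by auto
    show "{card X, card Y} \<subseteq> (\<lambda>v. card (neighbors V E v)) ` V"
      using nbX[OF \<open>x \<in> X\<close>] nbY[OF \<open>y \<in> Y\<close>] \<open>x \<in> X\<close> \<open>y \<in> Y\<close> basics(4)
      by (metis UnI1 UnI2 empty_subsetI image_eqI insert_subset)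
  qed
qed

lemma mind: "min_degree V E = card X"
  unfolding min_degree_def degs using le by simp
lemma maxd: "max_degree V E = card Y"
  unfolding max_degree_def degs using le by simp

lemma cardX_pos: "card X > 0" using finX basics(1) by (simp add: card_gt_0_iff)

lemma nb_card: "r \<in> V \<Longrightarrow> card (neighbors V E r) \<ge> card X"
  using nbX nbY le basics(4) by auto

lemma surj_ex: "\<exists>f. f ` Y = X"
proof -
  obtain h where h: "h ` X \<subseteq> Y" "inj_on h X" using card_le_inj[OF finX finY le] by blast
  obtain x0 where x0: "x0 \<in> X" using basics by blast
  define f where "f y = (if y \<in> h ` X then inv_into X h y else x0)" for y
  have "f ` Y \<subseteq> X" unfolding f_def using x0 by (auto intro: inv_into_into)
  moreover have "X \<subseteq> f ` Y"
  proof
    fix x assume "x \<in> X"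
    hence "f (h x) = x" unfolding f_def using h by auto
    thus "x \<in> f ` Y" using h \<open>x \<in> X\<close> by (metis image_eqI image_subset_iff)
  qed
  ultimately show ?thesis by blast
qed


lemma ys_ex: "\<exists>ys. set ys = Y \<and> distinct ys \<and> length ys = card Y"
  using finite_distinct_list[OF finY] distinct_card by metis

lemma xs_ex: "\<exists>xs. set xs = X \<and> distinct xs \<and> length xs = card X"
  using finite_distinct_list[OF finX] distinct_card by metis

lemma inV: "x \<in> X \<Longrightarrow> x \<in> V" "y \<in> Y \<Longrightarrow> y \<in> V" using basics(4) by auto

lemma side: "r \<in> V \<Longrightarrow> (r \<in> X \<and> r \<notin> Y) \<or> (r \<in> Y \<and> r \<notin> X)" using basics(3,4) by auto

lemma classical: "cop_number V E = min 2 (card X)"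
  unfolding cop_number_def
proof (rule least_eq)
  let ?cm = "\<lambda>p q. q \<in> V \<and> E p q"
  let ?rm = "\<lambda>(cs::'a list) r r'. r' = r \<or> (r' \<in> V \<and> E r r')"
  let ?cap = "\<lambda>cs r. r \<in> set cs"
  show "cops_win V V ?cm ?rm ?cap (\<lambda>cs r. True) (min 2 (card X))"
  proof (cases "card X = 1")
    case True
    then obtain x0 where X: "X = {x0}" using card_1_singletonE by blast
    have "\<forall>r \<in> V. cwin ?cm ?rm ?cap [x0] r True"
    proof
      fix r assume r: "r \<in> V"
      show "cwin ?cm ?rm ?cap [x0] r True"
      proof (cases "r = x0")
        case True thus ?thesis by (auto intro: cwin.captured)
      next
        case False
        hence "r \<in> Y" using r basics(4) X by auto
        hence "list_all2 (\<lambda>p q. p = q \<or> ?cm p q) [x0] [r]" using basics(5) X r by auto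
        moreover have "cwin ?cm ?rm ?cap [r] r False" by (auto intro: cwin.captured)
        ultimately show ?thesis by (rule cwin.cop_turn)
      qed
    qed
    thus ?thesis unfolding cops_win_def using True X inV by (intro exI[of _ "[x0]"]) auto
  next
    case False
    hence m: "min 2 (card X) = 2" using cardX_pos by auto
    obtain x0 y0 where xy: "x0 \<in> X" "y0 \<in> Y" using basics by blast
    have "\<forall>r \<in> V. cwin ?cm ?rm ?cap [x0, y0] r True"
    proof
      fix r assume r: "r \<in> V"
      show "cwin ?cm ?rm ?cap [x0, y0] r True"
      proof (cases "r \<in> X")
        case True
        hence "list_all2 (\<lambda>p q. p = q \<or> ?cm p q) [x0, y0] [x0, r]" using basics(5) xy r by auto
        moreover have "cwin ?cm ?rm ?cap [x0, r] r False" by (auto intro: cwin.captured)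
        ultimately show ?thesis by (rule cwin.cop_turn)
      next
        case False
        hence "r \<in> Y" using r basics(4) by auto
        hence "list_all2 (\<lambda>p q. p = q \<or> ?cm p q) [x0, y0] [r, y0]" using basics(5) xy r by auto
        moreover have "cwin ?cm ?rm ?cap [r, y0] r False" by (auto intro: cwin.captured)
        ultimately show ?thesis by (rule cwin.cop_turn)
      qed
    qed
    thus ?thesis unfolding cops_win_def m using xy inV by (intro exI[of _ "[x0, y0]"]) auto
  qed
next
  let ?cm = "\<lambda>p q. q \<in> V \<and> E p q"
  let ?rm = "\<lambda>(cs::'a list) r r'. r' = r \<or> (r' \<in> V \<and> E r r')"
  let ?cap = "\<lambda>cs r. r \<in> set cs"
  fix k assume k: "k < min 2 (card X)"
  show "\<not> cops_win V V ?cm ?rm ?cap (\<lambda>cs r. True) k"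
  proof (cases "k = 0")
    case True
    obtain x0 where "x0 \<in> X" using basics by blast
    show ?thesis
    proof (rule not_cops_win[where Inv = "\<lambda>cs r t. cs = []"])
      fix cs :: "'a list" assume "length cs = k"
      thus "\<exists>r\<in>V. True \<and> cs = []" using True inV \<open>x0 \<in> X\<close> by auto
    qed auto
  next
    case False
    hence k1: "k = 1" and X2: "card X \<ge> 2" using k by auto
    have Y2: "card Y \<ge> 2" using X2 le by auto
    have other: "\<And>c. c \<in> V \<Longrightarrow> \<exists>r \<in> V. r \<noteq> c \<and> \<not> E r c"
    proof -
      fix c assume c: "c \<in> V"
      show "\<exists>r \<in> V. r \<noteq> c \<and> \<not> E r c"
      proof (cases "c \<in> X")
        case True
        then obtain r where "r \<in> X" "r \<noteq> c" using card_two_other[OF finX X2] by blast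
        thus ?thesis using True basics(3,5) inV by blast
      next
        case False
        hence "c \<in> Y" using c basics(4) by auto
        then obtain r where "r \<in> Y" "r \<noteq> c" using card_two_other[OF finY Y2] by blast
        thus ?thesis using \<open>c \<in> Y\<close> basics(3,5) inV by blast
      qed
    qed
    show ?thesis
    proof (rule not_cops_win[where Inv = "\<lambda>cs r t. \<exists>c. cs = [c] \<and> c \<in> V \<and> r \<in> V \<and> r \<noteq> c \<and> (t \<longrightarrow> \<not> E r c)"])
      fix cs :: "'a list" assume "length cs = k" "set cs \<subseteq> V"
      then obtain c where c: "cs = [c]" "c \<in> V" using k1 by (cases cs) auto
      thus "\<exists>r\<in>V. True \<and> (\<exists>c. cs = [c] \<and> c \<in> V \<and> r \<in> V \<and> r \<noteq> c \<and> (True \<longrightarrow> \<not> E r c))"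
        using other[OF c(2)] by blast
    next
      fix cs cs' :: "'a list" and r
      assume inv: "\<exists>c. cs = [c] \<and> c \<in> V \<and> r \<in> V \<and> r \<noteq> c \<and> (True \<longrightarrow> \<not> E r c)"
        and mv: "list_all2 (\<lambda>p q. p = q \<or> ?cm p q) cs cs'"
      from inv obtain c where c: "cs = [c]" "c \<in> V" "r \<in> V" "r \<noteq> c" "\<not> E r c" by blast
      from mv c(1) obtain c' where c': "cs' = [c']" "c' = c \<or> ?cm c c'"
        by (cases cs') auto
      have "c' \<in> V" "r \<noteq> c'" using c c' basics(3,4,5) by auto
      thus "\<exists>c. cs' = [c] \<and> c \<in> V \<and> r \<in> V \<and> r \<noteq> c \<and> (False \<longrightarrow> \<not> E r c)"
        using c' c by blast
    next
      fix cs :: "'a list" and r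
      assume "\<exists>c. cs = [c] \<and> c \<in> V \<and> r \<in> V \<and> r \<noteq> c \<and> (False \<longrightarrow> \<not> E r c)"
      then obtain c where c: "cs = [c]" "c \<in> V" "r \<in> V" "r \<noteq> c" by blast
      show "\<exists>r'. ?rm cs r r' \<and> (\<exists>c. cs = [c] \<and> c \<in> V \<and> r' \<in> V \<and> r' \<noteq> c \<and> (True \<longrightarrow> \<not> E r' c))"
      proof (cases "E r c")
        case False thus ?thesis using c by blast
      next
        case True
        obtain r' where r': "r' \<in> V" "r' \<noteq> c" "\<not> E r' c" using other[OF c(2)] by blast
        have "E r r'" using True r' c basics(3,4,5) by auto
        thus ?thesis using r' c by blast
      qed
    qed auto
  qed
qed


lemma stay_inv_V:
  assumes "k < card Y" "x0 \<in> X"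
  shows "\<not> cops_win V P cm (\<lambda>cs r r'. r' = r \<or> Q cs r r') (\<lambda>cs r. neighbors V E r \<subseteq> set cs) (\<lambda>cs r. True) k"
proof (rule not_cops_win[where Inv = "\<lambda>cs r t. r = x0 \<and> length cs = k"])
  fix cs :: "'a list" and r t assume "r = x0 \<and> length cs = k"
  moreover have "card (set cs) \<le> length cs" by (rule card_length)
  ultimately show "\<not> neighbors V E r \<subseteq> set cs"
    using nbX[OF assms(2)] assms(1) card_mono[of "set cs" Y] by fastforce
qed (use assms inV in \<open>auto dest: list_all2_lengthD\<close>)

lemma stay_inv_E:
  assumes "k < card Y" "x0 \<in> X"
  shows "\<not> cops_win V P cm (\<lambda>cs r r'. r' = r \<or> Q cs r r') (\<lambda>cs r. \<forall>u \<in> neighbors V E r. {r, u} \<in> set cs) (\<lambda>cs r. True) k"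
proof (rule not_cops_win[where Inv = "\<lambda>cs r t. r = x0 \<and> length cs = k"])
  fix cs :: "'a set list" and r t assume a: "r = x0 \<and> length cs = k"
  show "\<not> (\<forall>u \<in> neighbors V E r. {r, u} \<in> set cs)"
  proof
    assume h: "\<forall>u \<in> neighbors V E r. {r, u} \<in> set cs"
    have "(\<lambda>u. {x0, u}) ` Y \<subseteq> set cs" using h a nbX[OF assms(2)] by auto
    moreover have "inj_on (\<lambda>u. {x0, u}) Y"
      using assms(2) basics(3) by (auto simp: inj_on_def doubleton_eq_iff)
    ultimately have "card Y \<le> card (set cs)"
      by (metis card_image card_mono finite_set)
    also have "\<dots> \<le> length cs" by (rule card_length)
    finally show False using a assms(1) by simp
  qed
qed (use assms inV in \<open>auto dest: list_all2_lengthD\<close>)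

lemma vertexV: "cop_number_V V E = card Y"
  unfolding cop_number_V_def
proof (rule least_eq)
  let ?cm = "\<lambda>p q. q \<in> V \<and> E p q"
  let ?rm = "\<lambda>(cs::'a list) r r'. r' = r \<or> (r' \<in> V \<and> E r r')"
  let ?cap = "\<lambda>cs r. neighbors V E r \<subseteq> set cs"
  obtain ys where ys: "set ys = Y" "length ys = card Y" using ys_ex by blast
  obtain f where f: "f ` Y = X" using surj_ex by blast
  have "\<forall>r \<in> V. cwin ?cm ?rm ?cap ys r True"
  proof
    fix r assume r: "r \<in> V"
    show "cwin ?cm ?rm ?cap ys r True"
    proof (cases "r \<in> X")
      case True thus ?thesis using nbX ys by (auto intro: cwin.captured)
    next
      case False
      hence rY: "r \<in> Y" using r basics(4) by auto
      have "list_all2 (\<lambda>p q. p = q \<or> ?cm p q) ys (map f ys)"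
        unfolding list_all2_conv_all_nth using ys f inV basics(5)
        by (auto simp: image_subset_iff)
      moreover have "cwin ?cm ?rm ?cap (map f ys) r False"
        using nbY[OF rY] ys f by (auto intro: cwin.captured)
      ultimately show ?thesis by (rule cwin.cop_turn)
    qed
  qed
  thus "cops_win V V ?cm ?rm ?cap (\<lambda>cs r. True) (card Y)"
    unfolding cops_win_def using ys inV by (intro exI[of _ ys]) auto
next
  fix k assume "k < card Y"
  moreover obtain x0 where "x0 \<in> X" using basics by blast
  ultimately show "\<not> cops_win V V (\<lambda>p q. q \<in> V \<and> E p q) (\<lambda>cs r r'. r' = r \<or> (r' \<in> V \<and> E r r'))
      (\<lambda>cs r. neighbors V E r \<subseteq> set cs) (\<lambda>cs r. True) k"
    by (rule stay_inv_V)
qed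

lemma edge_upper:
  "cops_win V (graph_edges V E) (edge_move V E) rm
      (\<lambda>cs r. \<forall>u \<in> neighbors V E r. {r, u} \<in> set cs) (\<lambda>cs r. True) (card Y)"
proof -
  let ?cm = "edge_move V E"
  let ?cap = "\<lambda>cs r. \<forall>u \<in> neighbors V E r. {r, u} \<in> set cs"
  obtain ys where ys: "set ys = Y" "length ys = card Y" using ys_ex by blast
  obtain f where f: "f ` Y = X" using surj_ex by blast
  have ge: "\<And>u v. u \<in> X \<Longrightarrow> v \<in> Y \<Longrightarrow> {u, v} \<in> graph_edges V E"
    unfolding graph_edges_def using inV basics(5) by blast
  have ge2: "\<And>u v. u \<in> X \<Longrightarrow> v \<in> Y \<Longrightarrow> {v, u} \<in> graph_edges V E"
    using ge by (simp add: insert_commute)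
  have fY: "\<And>y. y \<in> Y \<Longrightarrow> f y \<in> X" using f by blast
  let ?cs = "map (\<lambda>y. {f y, y}) ys"
  have "\<forall>r \<in> V. cwin ?cm rm ?cap ?cs r True"
  proof
    fix r assume r: "r \<in> V"
    show "cwin ?cm rm ?cap ?cs r True"
    proof (cases "r \<in> X")
      case True
      have "list_all2 (\<lambda>p q. p = q \<or> ?cm p q) ?cs (map (\<lambda>y. {r, y}) ys)"
        unfolding list_all2_conv_all_nth edge_move_def using ys ge True by auto
      moreover have "cwin ?cm rm ?cap (map (\<lambda>y. {r, y}) ys) r False"
        using nbX[OF True] ys by (auto intro: cwin.captured)
      ultimately show ?thesis by (rule cwin.cop_turn)
    next
      case False
      hence rY: "r \<in> Y" using r basics(4) by auto
      have "list_all2 (\<lambda>p q. p = q \<or> ?cm p q) ?cs (map (\<lambda>y. {f y, r}) ys)"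
        unfolding list_all2_conv_all_nth edge_move_def using ys ge fY rY by auto
      moreover have "?cap (map (\<lambda>y. {f y, r}) ys) r"
      proof
        fix u assume "u \<in> neighbors V E r"
        hence "u \<in> X" using nbY[OF rY] by simp
        then obtain y where "y \<in> Y" "u = f y" using f by blast
        thus "{r, u} \<in> set (map (\<lambda>y. {f y, r}) ys)" using ys by (auto simp: insert_commute)
      qed
      hence "cwin ?cm rm ?cap (map (\<lambda>y. {f y, r}) ys) r False" by (rule cwin.captured)
      ultimately show ?thesis by (rule cwin.cop_turn)
    qed
  qed
  moreover have "set ?cs \<subseteq> graph_edges V E" using ys ge fY by auto
  ultimately show ?thesis unfolding cops_win_def using ys by (intro exI[of _ ?cs]) auto
qed

lemma edgeE: "cop_number_E V E = card Y"
  unfolding cop_number_E_def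
proof (rule least_eq)
  show "cops_win V (graph_edges V E) (edge_move V E) (\<lambda>cs r r'. r' = r \<or> r' \<in> V \<and> E r r')
     (\<lambda>cs r. \<forall>u\<in>neighbors V E r. {r, u} \<in> set cs) (\<lambda>cs r. True) (card Y)" by (rule edge_upper)
next
  fix k assume "k < card Y"
  moreover obtain x0 where "x0 \<in> X" using basics by blast
  ultimately show "\<not> cops_win V (graph_edges V E) (edge_move V E) (\<lambda>cs r r'. r' = r \<or> r' \<in> V \<and> E r r')
     (\<lambda>cs r. \<forall>u\<in>neighbors V E r. {r, u} \<in> set cs) (\<lambda>cs r. True) k" by (rule stay_inv_E)
qed

lemma edgeEr: "cop_number_Er V E = card Y"
  unfolding cop_number_Er_def
proof (rule least_eq)
  show "cops_win V (graph_edges V E) (edge_move V E) (\<lambda>cs r r'. r' = r \<or> (r' \<in> V \<and> E r r' \<and> {r, r'} \<notin> set cs))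
     (\<lambda>cs r. \<forall>u\<in>neighbors V E r. {r, u} \<in> set cs) (\<lambda>cs r. True) (card Y)" by (rule edge_upper)
next
  fix k assume "k < card Y"
  moreover obtain x0 where "x0 \<in> X" using basics by blast
  ultimately show "\<not> cops_win V (graph_edges V E) (edge_move V E) (\<lambda>cs r r'. r' = r \<or> (r' \<in> V \<and> E r r' \<and> {r, r'} \<notin> set cs))
     (\<lambda>cs r. \<forall>u\<in>neighbors V E r. {r, u} \<in> set cs) (\<lambda>cs r. True) k" by (rule stay_inv_E)
qed

lemma vertexVr: "cop_number_Vr V E = card X"
  unfolding cop_number_Vr_def
proof (rule least_eq)
  let ?cm = "\<lambda>p q. q \<in> V \<and> E p q"
  let ?rm = "\<lambda>(cs::'a list) r r'. (r' = r \<or> (r' \<in> V \<and> E r r')) \<and> r' \<notin> set cs"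
  let ?cap = "\<lambda>cs r. neighbors V E r \<subseteq> set cs"
  obtain xs where xs: "set xs = X" "length xs = card X" using xs_ex by blast
  have "\<forall>r \<in> V. r \<notin> set xs \<longrightarrow> cwin ?cm ?rm ?cap xs r True"
  proof (intro ballI impI)
    fix r assume "r \<in> V" "r \<notin> set xs"
    hence "r \<in> Y" using xs basics(4) by auto
    thus "cwin ?cm ?rm ?cap xs r True" using nbY xs by (auto intro: cwin.captured)
  qed
  thus "cops_win V V ?cm ?rm ?cap (\<lambda>cs r. r \<notin> set cs) (card X)"
    unfolding cops_win_def using xs inV by (intro exI[of _ xs]) auto
next
  let ?cm = "\<lambda>p q. q \<in> V \<and> E p q"
  let ?rm = "\<lambda>(cs::'a list) r r'. (r' = r \<or> (r' \<in> V \<and> E r r')) \<and> r' \<notin> set cs"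
  let ?cap = "\<lambda>cs r. neighbors V E r \<subseteq> set cs"
  fix k assume k: "k < card X"
  have small: "\<And>cs::'a list. length cs = k \<Longrightarrow> card (set cs) < card X"
    using k card_length le_less_trans by blast
  have nsub: "\<And>cs::'a list. \<And>A. length cs = k \<Longrightarrow> finite A \<Longrightarrow> card A \<ge> card X \<Longrightarrow> \<not> A \<subseteq> set cs"
  proof
    fix cs :: "'a list" and A assume "length cs = k" "finite A" "card A \<ge> card X" "A \<subseteq> set cs"
    hence "card A \<le> card (set cs)" by (intro card_mono) auto
    thus False using small[OF \<open>length cs = k\<close>] \<open>card A \<ge> card X\<close> by simp
  qed
  have finN: "\<And>r. finite (neighbors V E r)" unfolding neighbors_def using fin by simp
  show "\<not> cops_win V V ?cm ?rm ?cap (\<lambda>cs r. r \<notin> set cs) k"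
  proof (rule not_cops_win[where Inv = "\<lambda>cs r t. length cs = k \<and> r \<in> V \<and> (t \<longrightarrow> r \<notin> set cs)"])
    fix cs :: "'a list" assume "length cs = k" "set cs \<subseteq> V"
    hence "\<not> X \<subseteq> set cs" using nsub finX by blast
    then obtain r where "r \<in> X" "r \<notin> set cs" by blast
    thus "\<exists>r\<in>V. r \<notin> set cs \<and> length cs = k \<and> r \<in> V \<and> (True \<longrightarrow> r \<notin> set cs)"
      using \<open>length cs = k\<close> inV by blast
  next
    fix cs :: "'a list" and r t assume "length cs = k \<and> r \<in> V \<and> (t \<longrightarrow> r \<notin> set cs)"
    thus "\<not> neighbors V E r \<subseteq> set cs" using nsub finN nb_card by blast
  next
    fix cs :: "'a list" and r assume "length cs = k \<and> r \<in> V \<and> (False \<longrightarrow> r \<notin> set cs)"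
    hence a: "length cs = k" "r \<in> V" by auto
    hence "\<not> neighbors V E r \<subseteq> set cs" using nsub finN nb_card by blast
    then obtain u where "u \<in> neighbors V E r" "u \<notin> set cs" by blast
    hence "u \<in> V" "E r u" "u \<notin> set cs" unfolding neighbors_def by auto
    thus "\<exists>r'. ?rm cs r r' \<and> length cs = k \<and> r' \<in> V \<and> (True \<longrightarrow> r' \<notin> set cs)"
      using a by blast
  qed (auto dest: list_all2_lengthD)
qed

lemma main: "cop_number V E = min 2 (min_degree V E) \<and>
         cop_number_Vr V E = min_degree V E \<and>
         cop_number_V V E = max_degree V E \<and>
         cop_number_Er V E = max_degree V E \<and>
         cop_number_E V E = max_degree V E"
  using classical vertexVr vertexV edgeEr edgeE mind maxd by simp

end

theorem proposition1:
  fixes V X Y :: "'a set" and E :: "'a \<Rightarrow> 'a \<Rightarrow> bool"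
  assumes "finite V"
    and "complete_bipartite V E X Y"
  shows "cop_number V E = min 2 (min_degree V E) \<and>
         cop_number_Vr V E = min_degree V E \<and>
         cop_number_V V E = max_degree V E \<and>
         cop_number_Er V E = max_degree V E \<and>
         cop_number_E V E = max_degree V E"
proof (cases "card X \<le> card Y")
  case True
  interpret kb V E X Y using assms True by unfold_locales
  show ?thesis by (rule main)
next
  case False
  have "complete_bipartite V E Y X" using assms(2) unfolding complete_bipartite_def by blast
  interpret kb V E Y X using assms False \<open>complete_bipartite V E Y X\<close> by unfold_locales auto
  show ?thesis by (rule main)
qed

end
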